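(* Let $S$ be a semidomain. The following are equivalent: (a) $S$ is a BFS; (b) $S[x]$ is a BFS; (c) $S[x^{\pm1}]$ is a BFS.
   Context: A semidomain is a subset $S$ of an integral domain $R$ containing $0$ and $1$ and closed under addition and multiplication; $S^*=S\setminus\{0\}$ is a monoid under multiplication, with units forming $S^\times$. An atom is a nonunit $a\in S^*$ such that $a=bc$ with $b,c\in S^*$ forces $b$ or $c$ to be a unit; $S$ is atomic if every nonunit of $S^*$ is a finite product of atoms. $S$ is a bounded factorization semidomain (BFS) if $S$ is atomic and, for each nonunit $b\in S^*$, the set of lengths $\{\ell : b=a_1\cdots a_\ell \text{ with } a_i \text{ atoms}\}$ is finite. $S[x]$ (resp. $S[x^{\pm1}]$) is the semidomain of polynomials (resp. Laurent polynomials) in $R[x]$ (resp. $R[x^{\pm1}]$) with coefficients in $S$. *)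

theory Defs
  imports "HOL-Computational_Algebra.Polynomial" "HOL-Computational_Algebra.Formal_Laurent_Series"
begin

definition semidomain :: "'a::idom set \<Rightarrow> bool" where
  "semidomain S \<longleftrightarrow> 0 \<in> S \<and> 1 \<in> S \<and> (\<forall>a\<in>S. \<forall>b\<in>S. a + b \<in> S \<and> a * b \<in> S)"

definition sunit :: "'a::idom set \<Rightarrow> 'a \<Rightarrow> bool" where
  "sunit S u \<longleftrightarrow> u \<in> S \<and> u \<noteq> 0 \<and> (\<exists>v\<in>S. v \<noteq> 0 \<and> u * v = 1)"

definition satom :: "'a::idom set \<Rightarrow> 'a \<Rightarrow> bool" where
  "satom S a \<longleftrightarrow> a \<in> S \<and> a \<noteq> 0 \<and> \<not> sunit S a \<and>
     (\<forall>b\<in>S - {0}. \<forall>c\<in>S - {0}. a = b * c \<longrightarrow> sunit S b \<or> sunit S c)"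

definition slengths :: "'a::idom set \<Rightarrow> 'a \<Rightarrow> nat set" where
  "slengths S b = {length as | as. (\<forall>a\<in>set as. satom S a) \<and> prod_list as = b}"

definition satomic :: "'a::idom set \<Rightarrow> bool" where
  "satomic S \<longleftrightarrow> (\<forall>b\<in>S - {0}. \<not> sunit S b \<longrightarrow> slengths S b \<noteq> {})"

definition BFS :: "'a::idom set \<Rightarrow> bool" where
  "BFS S \<longleftrightarrow> satomic S \<and> (\<forall>b\<in>S - {0}. \<not> sunit S b \<longrightarrow> finite (slengths S b))"

definition poly_semidomain :: "'a::idom set \<Rightarrow> 'a poly set" where
  "poly_semidomain S = {p. \<forall>i. coeff p i \<in> S}"

text \<open>S[x^{+-1}]: Laurent polynomials (Laurent series with finitely many nonzero
  coefficients) over the ambient domain with all coefficients in S.\<close>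
definition laurent_semidomain :: "'a::idom set \<Rightarrow> 'a fls set" where
  "laurent_semidomain S = {f. finite {n. fls_nth f n \<noteq> 0} \<and> (\<forall>n. fls_nth f n \<in> S)}"

end

theory Submission
  imports Defs
begin


definition gb :: "'a::idom set \<Rightarrow> bool" where
  "gb T \<longleftrightarrow> (\<forall>b\<in>T - {0}. \<exists>N. \<forall>xs. set xs \<subseteq> T \<and> prod_list xs = b \<longrightarrow>
      length (filter (\<lambda>x. \<not> sunit T x) xs) \<le> N)"

lemma sd_one: "semidomain T \<Longrightarrow> 1 \<in> T" by (simp add: semidomain_def)
lemma sd_zero: "semidomain T \<Longrightarrow> 0 \<in> T" by (simp add: semidomain_def)
lemma sd_mult: "semidomain T \<Longrightarrow> a \<in> T \<Longrightarrow> b \<in> T \<Longrightarrow> a * b \<in> T" by (simp add: semidomain_def)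
lemma sd_add: "semidomain T \<Longrightarrow> a \<in> T \<Longrightarrow> b \<in> T \<Longrightarrow> a + b \<in> T" by (simp add: semidomain_def)

lemma sd_prod_list: "semidomain T \<Longrightarrow> set xs \<subseteq> T \<Longrightarrow> prod_list xs \<in> T"
  by (induction xs) (auto simp: sd_one sd_mult)

lemma sd_sum: assumes "semidomain T" shows "(\<forall>i\<in>A. f i \<in> T) \<Longrightarrow> sum f A \<in> T"
proof (cases "finite A")
  case True
  then show "(\<forall>i\<in>A. f i \<in> T) \<Longrightarrow> sum f A \<in> T"
    by (induction A rule: finite_induct) (auto simp: sd_zero sd_add assms)
qed (simp add: sd_zero assms)

lemma sunit_one: "semidomain T \<Longrightarrow> sunit T 1"
  unfolding sunit_def using sd_one by fastforce

lemma sunit_multD: assumes "semidomain T" "a \<in> T" "b \<in> T" "sunit T (a * b)" shows "sunit T a"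
proof -
  from assms(4) obtain v where v: "v \<in> T" "v \<noteq> 0" "a * b * v = 1" unfolding sunit_def by auto
  then have "a * (b * v) = 1" by (simp add: mult.assoc)
  moreover have "b * v \<in> T" using assms v sd_mult by blast
  moreover have "b * v \<noteq> 0" using \<open>a * (b * v) = 1\<close> by auto
  moreover have "a \<noteq> 0" using \<open>a * (b * v) = 1\<close> by auto
  ultimately show ?thesis using assms unfolding sunit_def by blast
qed

lemma sunit_mult: assumes "semidomain T" "sunit T a" "sunit T b" shows "sunit T (a * b)"
proof -
  from assms obtain v w where "v \<in> T" "v \<noteq> 0" "a * v = 1" "w \<in> T" "w \<noteq> 0" "b * w = 1" "a \<in> T" "b \<in> T"
    "a \<noteq> 0" "b \<noteq> 0"
    unfolding sunit_def by auto
  then have e: "(a * b) * (v * w) = 1"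
    by (simp add: mult.assoc mult.left_commute[of b v w])
  have "a * b \<in> T" "v * w \<in> T" using assms sd_mult \<open>v\<in>T\<close> \<open>w\<in>T\<close> \<open>a\<in>T\<close> \<open>b\<in>T\<close> by auto
  moreover have "a * b \<noteq> 0" "v * w \<noteq> 0" using e by auto
  ultimately show ?thesis unfolding sunit_def using e by blast
qed

lemma satom_unit_mult: assumes "semidomain T" "sunit T u" "satom T a" shows "satom T (u * a)"
proof -
  from assms obtain v where v: "v \<in> T" "v \<noteq> 0" "u * v = 1" and u: "u \<in> T" "u \<noteq> 0"
    unfolding sunit_def by auto
  have a: "a \<in> T" "a \<noteq> 0" "\<not> sunit T a" using assms(3) unfolding satom_def by auto
  have 1: "u * a \<in> T" "u * a \<noteq> 0" using a u sd_mult assms by auto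
  have "\<not> sunit T (a * u)"
    using sunit_multD[OF assms(1) a(1) u(1)] a by auto
  then have 2: "\<not> sunit T (u * a)" by (subst mult.commute)
  have 3: "sunit T b \<or> sunit T c" if "b \<in> T - {0}" "c \<in> T - {0}" "u * a = b * c" for b c
  proof -
    have "a = v * (u * a)" using v by (simp add: mult.assoc[symmetric] mult.commute[of v u])
    also have "\<dots> = (v * b) * c" using that by (simp add: mult.assoc)
    finally have "a = (v * b) * c" .
    moreover have "v * b \<in> T - {0}" using that v sd_mult assms(1) by auto
    ultimately have "sunit T (v * b) \<or> sunit T c" using assms(3) that unfolding satom_def by blast
    then show ?thesis using sunit_multD[OF assms(1), of b v] that v by (auto simp: mult.commute)
  qed
  show ?thesis using 1 2 3 unfolding satom_def by blast
qed

lemma sunit_prod_list: "semidomain T \<Longrightarrow> (\<forall>x\<in>set xs. sunit T x) \<Longrightarrow> sunit T (prod_list xs)"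
  by (induction xs) (auto simp: sunit_one sunit_mult)

lemma sunit_prod_list_elem:
  assumes "semidomain T" "set xs \<subseteq> T" "sunit T (prod_list xs)" "x \<in> set xs"
  shows "sunit T x"
proof -
  obtain ys zs where xs: "xs = ys @ x # zs" using split_list assms(4) by metis
  have "prod_list xs = x * (prod_list ys * prod_list zs)" unfolding xs by (simp add: algebra_simps)
  moreover have "prod_list ys * prod_list zs \<in> T"
  proof -
    have "prod_list ys \<in> T" "prod_list zs \<in> T" using sd_prod_list[OF assms(1)] assms(2) xs by auto
    then show ?thesis using sd_mult[OF assms(1)] by blast
  qed
  moreover have "x \<in> T" using assms by auto
  ultimately show ?thesis using sunit_multD[OF assms(1) \<open>x \<in> T\<close>] assms(3) by auto
qed

lemma atoms_factor:
  assumes "semidomain T" "satomic T"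
  shows "set xs \<subseteq> T - {0} \<Longrightarrow> \<exists>u as. sunit T u \<and> (\<forall>a\<in>set as. satom T a) \<and>
     prod_list xs = u * prod_list as \<and> length (filter (\<lambda>x. \<not> sunit T x) xs) \<le> length as"
proof (induction xs)
  case Nil
  then show ?case using sunit_one[OF assms(1)] by (intro exI[of _ 1] exI[of _ "[]"]) auto
next
  case (Cons x xs)
  then obtain u as where IH: "sunit T u" "\<forall>a\<in>set as. satom T a"
     "prod_list xs = u * prod_list as" "length (filter (\<lambda>x. \<not> sunit T x) xs) \<le> length as" by auto
  show ?case
  proof (cases "sunit T x")
    case True
    then show ?thesis using IH sunit_mult[OF assms(1) True IH(1)]
      by (intro exI[of _ "x * u"] exI[of _ as]) (auto simp: mult.assoc)
  next
    case False
    with Cons.prems assms(2) have "slengths T x \<noteq> {}" unfolding satomic_def by auto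
    then obtain bs where bs: "\<forall>a\<in>set bs. satom T a" "prod_list bs = x" unfolding slengths_def by auto
    have "bs \<noteq> []" using bs False sunit_one[OF assms(1)] by auto
    then have lb: "0 < length bs" by simp
    show ?thesis
    proof (intro exI[of _ u] exI[of _ "bs @ as"] conjI)
      show "prod_list (x # xs) = u * prod_list (bs @ as)" using IH bs by (simp add: algebra_simps)
      show "length (filter (\<lambda>x. \<not> sunit T x) (x # xs)) \<le> length (bs @ as)"
      proof -
        have "Suc (length (filter (\<lambda>x. \<not> sunit T x) xs)) \<le> length bs + length as"
          using IH(4) lb by linarith
        then show ?thesis using False by simp
      qed
    qed (use IH bs in auto)
  qed
qed

lemma BFS_imp_gb: assumes "semidomain T" "BFS T" shows "gb T"
  unfolding gb_def
proof
  fix b assume b: "b \<in> T - {0}"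
  show "\<exists>N. \<forall>xs. set xs \<subseteq> T \<and> prod_list xs = b \<longrightarrow> length (filter (\<lambda>x. \<not> sunit T x) xs) \<le> N"
  proof (cases "sunit T b")
    case True
    show ?thesis
    proof (intro exI[of _ 0] allI impI)
      fix xs assume xs: "set xs \<subseteq> T \<and> prod_list xs = b"
      then have "\<forall>x\<in>set xs. sunit T x" using sunit_prod_list_elem[OF assms(1)] True by blast
      then show "length (filter (\<lambda>x. \<not> sunit T x) xs) \<le> 0" by (simp add: filter_empty_conv)
    qed
  next
    case False
    show ?thesis
    proof (intro exI[of _ "Max (slengths T b)"] allI impI)
      fix xs assume xs: "set xs \<subseteq> T \<and> prod_list xs = b"
      then have "set xs \<subseteq> T - {0}" using b by (auto simp: prod_list_zero_iff)
      from atoms_factor[OF assms(1) _ this] assms(2) obtain u as where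
        ua: "sunit T u" "\<forall>a\<in>set as. satom T a" "prod_list xs = u * prod_list as"
          "length (filter (\<lambda>x. \<not> sunit T x) xs) \<le> length as" unfolding BFS_def by blast
      have "as \<noteq> []" using ua xs False by auto
      then obtain a as' where as: "as = a # as'" by (cases as) auto
      have "satom T (u * a)" using satom_unit_mult[OF assms(1) ua(1)] ua(2) as by auto
      note ua' = this
      have "length ((u * a) # as') \<in> slengths T b"
        unfolding slengths_def mem_Collect_eq
        by (rule exI[of _ "(u * a) # as'"]) (use ua ua' xs as in \<open>auto simp: mult.assoc\<close>)
      moreover have "finite (slengths T b)" using assms(2) b False unfolding BFS_def by auto
      ultimately have "length as \<le> Max (slengths T b)" using as by (metis Max_ge length_Cons)
      then show "length (filter (\<lambda>x. \<not> sunit T x) xs) \<le> Max (slengths T b)" using ua by linarith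
    qed
  qed
qed

lemma gb_imp_BFS: assumes "semidomain T" "gb T" shows "BFS T"
proof -
  have fin: "finite (slengths T b)" if b: "b \<in> T - {0}" "\<not> sunit T b" for b
  proof -
    obtain N where N: "\<forall>xs. set xs \<subseteq> T \<and> prod_list xs = b \<longrightarrow> length (filter (\<lambda>x. \<not> sunit T x) xs) \<le> N"
      using assms(2) b unfolding gb_def by blast
    have "slengths T b \<subseteq> {..N}"
    proof
      fix l assume "l \<in> slengths T b"
      then obtain as where as: "\<forall>a\<in>set as. satom T a" "prod_list as = b" "l = length as"
        unfolding slengths_def by auto
      then have "set as \<subseteq> T" "filter (\<lambda>x. \<not> sunit T x) as = as" unfolding satom_def by auto
      then show "l \<in> {..N}" using N as by (metis atMost_iff)
    qed
    then show ?thesis using finite_subset by blast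
  qed
  have atomic: "slengths T b \<noteq> {}" if b: "b \<in> T - {0}" "\<not> sunit T b" for b
  proof -
    obtain N where N: "\<forall>xs. set xs \<subseteq> T \<and> prod_list xs = b \<longrightarrow> length (filter (\<lambda>x. \<not> sunit T x) xs) \<le> N"
      using assms(2) b unfolding gb_def by blast
    define P where "P xs \<longleftrightarrow> set xs \<subseteq> T \<and> (\<forall>x\<in>set xs. \<not> sunit T x) \<and> prod_list xs = b" for xs
    have "P [b]" using b unfolding P_def by auto
    moreover have "\<forall>ys. P ys \<longrightarrow> length ys < Suc N"
    proof (intro allI impI)
      fix ys assume "P ys"
      then have "filter (\<lambda>x. \<not> sunit T x) ys = ys" "set ys \<subseteq> T \<and> prod_list ys = b" unfolding P_def by auto
      then show "length ys < Suc N" using N by (metis less_Suc_eq_le)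
    qed
    ultimately obtain xs where xs: "P xs" "\<forall>ys. P ys \<longrightarrow> length ys \<le> length xs"
      using Lattices_Big.ex_has_greatest_nat[of P "[b]" length "Suc N"] by blast
    have "satom T x" if x: "x \<in> set xs" for x
    proof -
      have xT: "x \<in> T" "\<not> sunit T x" using xs x unfolding P_def by auto
      have "x \<noteq> 0" using xs x b unfolding P_def by (auto simp: prod_list_zero_iff)
      moreover have "sunit T c \<or> sunit T d" if cd: "c \<in> T - {0}" "d \<in> T - {0}" "x = c * d" for c d
      proof (rule ccontr)
        assume nu: "\<not> (sunit T c \<or> sunit T d)"
        obtain ys zs where yz: "xs = ys @ x # zs" using split_list x by metis
        have "P (ys @ c # d # zs)" using xs(1) cd nu unfolding P_def yz by (auto simp: algebra_simps)
        then have "length (ys @ c # d # zs) \<le> length xs" using xs(2) by blast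
        then show False unfolding yz by simp
      qed
      ultimately show ?thesis using xT unfolding satom_def by blast
    qed
    then have "length xs \<in> slengths T b" using xs(1) unfolding slengths_def P_def by auto
    then show ?thesis by auto
  qed
  show ?thesis unfolding BFS_def satomic_def using fin atomic by blast
qed

lemma BFS_iff_gb: "semidomain T \<Longrightarrow> BFS T \<longleftrightarrow> gb T"
  using BFS_imp_gb gb_imp_BFS by blast

lemma filter_count_le2:
  "(\<forall>x\<in>set xs. P x \<longrightarrow> Q x \<or> R x) \<Longrightarrow>
   length (filter P xs) \<le> length (filter Q xs) + length (filter R xs)"
  by (induction xs) auto

lemma filter_count_le1:
  "(\<forall>x\<in>set xs. P x \<longrightarrow> Q x) \<Longrightarrow> length (filter P xs) \<le> length (filter Q xs)"
  by (induction xs) auto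

lemma filter_count_sum: "length (filter (\<lambda>x. f x \<noteq> (0::nat)) xs) \<le> sum_list (map f xs)"
  by (induction xs) auto



lemma semidomain_poly: assumes "semidomain S" shows "semidomain (poly_semidomain S)"
proof -
  have "0 \<in> poly_semidomain S" unfolding poly_semidomain_def using sd_zero[OF assms] by simp
  moreover have "1 \<in> poly_semidomain S" unfolding poly_semidomain_def
    using sd_zero[OF assms] sd_one[OF assms] by (simp add: coeff_1)
  moreover have "a + b \<in> poly_semidomain S \<and> a * b \<in> poly_semidomain S"
    if a: "a \<in> poly_semidomain S" and b: "b \<in> poly_semidomain S" for a b
  proof -
    have a': "\<forall>i. coeff a i \<in> S" and b': "\<forall>i. coeff b i \<in> S" using a b unfolding poly_semidomain_def by auto
    have "\<forall>i. coeff (a + b) i \<in> S" using a' b' sd_add[OF assms] by simp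
    moreover have "\<forall>i. coeff (a * b) i \<in> S"
      unfolding coeff_mult using a' b' sd_mult[OF assms] by (auto intro!: sd_sum[OF assms])
    ultimately show ?thesis unfolding poly_semidomain_def by simp
  qed
  ultimately show ?thesis unfolding semidomain_def by blast
qed

lemma pconst_in: "semidomain S \<Longrightarrow> c \<in> S \<Longrightarrow> [:c:] \<in> poly_semidomain S"
  unfolding poly_semidomain_def by (auto simp: coeff_pCons sd_zero split: nat.split)

lemma sunit_poly_iff:
  assumes S: "semidomain S" and p: "p \<in> poly_semidomain S"
  shows "sunit (poly_semidomain S) p \<longleftrightarrow> degree p = 0 \<and> sunit S (coeff p 0)"
proof
  assume "sunit (poly_semidomain S) p"
  then obtain q where q: "q \<in> poly_semidomain S" "q \<noteq> 0" "p * q = 1" "p \<noteq> 0"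
    unfolding sunit_def by auto
  have "degree p + degree q = 0" using degree_mult_eq[OF q(4) q(2)] q(3) by simp
  then have d: "degree p = 0" "degree q = 0" by auto
  have "coeff (p * q) 0 = 1" using q(3) by simp
  then have c: "coeff p 0 * coeff q 0 = 1" by (simp add: coeff_mult_0)
  have "coeff p 0 \<in> S" "coeff q 0 \<in> S" using p q(1) unfolding poly_semidomain_def by auto
  then have "sunit S (coeff p 0)" unfolding sunit_def using c
    by (metis mult_zero_left mult_zero_right zero_neq_one)
  with d show "degree p = 0 \<and> sunit S (coeff p 0)" by simp
next
  assume a: "degree p = 0 \<and> sunit S (coeff p 0)"
  then obtain v where v: "v \<in> S" "v \<noteq> 0" "coeff p 0 * v = 1" "coeff p 0 \<in> S" "coeff p 0 \<noteq> 0"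
    unfolding sunit_def by auto
  have pe: "p = [:coeff p 0:]" using degree_0_id a by metis
  have v': "v * coeff p 0 = 1" using v(3) by (simp add: mult.commute)
  have "p * [:v:] = 1" by (subst pe) (simp add: v' one_pCons)
  moreover have "[:v:] \<in> poly_semidomain S" using pconst_in[OF S v(1)] .
  moreover have "[:v:] \<noteq> 0" using v by simp
  moreover have "p \<noteq> 0" using v(5) by auto
  ultimately show "sunit (poly_semidomain S) p" unfolding sunit_def using p by blast
qed

lemma sunit_pconst: "semidomain S \<Longrightarrow> c \<in> S \<Longrightarrow> sunit (poly_semidomain S) [:c:] \<longleftrightarrow> sunit S c"
  using sunit_poly_iff[of S "[:c:]"] pconst_in by auto

lemma lead_coeff_prod_list: "lead_coeff (prod_list ps) = prod_list (map lead_coeff (ps :: 'a::idom poly list))"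
  by (induction ps) (auto simp: lead_coeff_mult)

lemma degree_prod_list: "0 \<notin> set ps \<Longrightarrow> degree (prod_list ps) = sum_list (map degree (ps :: 'a::idom poly list))"
  by (induction ps) (auto simp: degree_mult_eq prod_list_zero_iff)

lemma prod_list_pconst: "prod_list (map (\<lambda>c. [:c:]) xs) = [:prod_list xs:]"
  by (induction xs) (auto simp: one_pCons mult.commute)

lemma gb_poly: assumes S: "semidomain S" and g: "gb S" shows "gb (poly_semidomain S)"
  unfolding gb_def
proof
  fix p assume p: "p \<in> poly_semidomain S - {0}"
  have lc: "lead_coeff p \<in> S - {0}" using p unfolding poly_semidomain_def by auto
  then obtain N where N: "\<forall>xs. set xs \<subseteq> S \<and> prod_list xs = lead_coeff p \<longrightarrow>
      length (filter (\<lambda>x. \<not> sunit S x) xs) \<le> N" using g unfolding gb_def by blast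
  show "\<exists>N. \<forall>qs. set qs \<subseteq> poly_semidomain S \<and> prod_list qs = p \<longrightarrow>
      length (filter (\<lambda>x. \<not> sunit (poly_semidomain S) x) qs) \<le> N"
  proof (intro exI[of _ "degree p + N"] allI impI)
    fix qs assume qs: "set qs \<subseteq> poly_semidomain S \<and> prod_list qs = p"
    have nz: "0 \<notin> set qs" using qs p by (auto simp: prod_list_zero_iff)
    have "length (filter (\<lambda>x. \<not> sunit (poly_semidomain S) x) qs) \<le>
       length (filter (\<lambda>q. degree q \<noteq> 0) qs) + length (filter (\<lambda>q. \<not> sunit S (lead_coeff q)) qs)"
    proof (rule filter_count_le2, intro ballI impI)
      fix q assume "q \<in> set qs" "\<not> sunit (poly_semidomain S) q"
      then show "degree q \<noteq> 0 \<or> \<not> sunit S (lead_coeff q)"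
        using sunit_poly_iff[OF S, of q] qs by auto
    qed
    moreover have "length (filter (\<lambda>q. degree q \<noteq> 0) qs) \<le> degree p"
      using filter_count_sum[of degree qs] degree_prod_list[OF nz] qs by simp
    moreover have "length (filter (\<lambda>q. \<not> sunit S (lead_coeff q)) qs) \<le> N"
    proof -
      have "set (map lead_coeff qs) \<subseteq> S" using qs unfolding poly_semidomain_def by auto
      moreover have "prod_list (map lead_coeff qs) = lead_coeff p"
        using qs lead_coeff_prod_list by metis
      ultimately have "length (filter (\<lambda>x. \<not> sunit S x) (map lead_coeff qs)) \<le> N" using N by blast
      then show ?thesis by (simp add: filter_map o_def)
    qed
    ultimately show "length (filter (\<lambda>x. \<not> sunit (poly_semidomain S) x) qs) \<le> degree p + N"
      by linarith
  qed
qed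

lemma gb_poly_rev: assumes S: "semidomain S" and g: "gb (poly_semidomain S)" shows "gb S"
  unfolding gb_def
proof
  fix b assume b: "b \<in> S - {0}"
  then have "[:b:] \<in> poly_semidomain S - {0}" using pconst_in[OF S] by auto
  then obtain N where N: "\<forall>xs. set xs \<subseteq> poly_semidomain S \<and> prod_list xs = [:b:] \<longrightarrow>
      length (filter (\<lambda>x. \<not> sunit (poly_semidomain S) x) xs) \<le> N" using g unfolding gb_def by blast
  show "\<exists>N. \<forall>xs. set xs \<subseteq> S \<and> prod_list xs = b \<longrightarrow> length (filter (\<lambda>x. \<not> sunit S x) xs) \<le> N"
  proof (intro exI[of _ N] allI impI)
    fix xs assume xs: "set xs \<subseteq> S \<and> prod_list xs = b"
    have "set (map (\<lambda>c. [:c:]) xs) \<subseteq> poly_semidomain S" using xs pconst_in[OF S] by auto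
    moreover have "prod_list (map (\<lambda>c. [:c:]) xs) = [:b:]" using xs prod_list_pconst by metis
    ultimately have "length (filter (\<lambda>x. \<not> sunit (poly_semidomain S) x) (map (\<lambda>c. [:c:]) xs)) \<le> N"
      using N by blast
    moreover have "filter (\<lambda>x. \<not> sunit (poly_semidomain S) [:x:]) xs = filter (\<lambda>x. \<not> sunit S x) xs"
      using xs sunit_pconst[OF S] by (intro filter_cong) auto
    ultimately show "length (filter (\<lambda>x. \<not> sunit S x) xs) \<le> N" by (simp add: filter_map o_def)
  qed
qed

lemma BFS_poly_iff: "semidomain S \<Longrightarrow> BFS S \<longleftrightarrow> BFS (poly_semidomain S)"
  using BFS_iff_gb semidomain_poly gb_poly gb_poly_rev by metis



unbundle fps_syntax

abbreviation psi :: "'a::idom poly \<Rightarrow> 'a fls" where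
  "psi p \<equiv> fps_to_fls (fps_of_poly p)"

lemma supp_bound:
  assumes "finite {n. (f::'a::zero fls) $$ n \<noteq> 0}" shows "\<exists>A. \<forall>n>A. f $$ n = 0"
proof (intro exI[of _ "Max (insert 0 {n. f $$ n \<noteq> 0})"] allI impI)
  fix n assume "n > Max (insert 0 {n. f $$ n \<noteq> 0})"
  moreover have "m \<le> Max (insert 0 {n. f $$ n \<noteq> 0})" if "m \<in> {n. f $$ n \<noteq> 0}" for m
    using that assms by (intro Max_ge) auto
  ultimately have "n \<notin> {n. f $$ n \<noteq> 0}" by force
  then show "f $$ n = 0" by simp
qed

lemma laurentD: "f \<in> laurent_semidomain S \<Longrightarrow> finite {n. f $$ n \<noteq> 0} \<and> (\<forall>n. f $$ n \<in> S)"
  unfolding laurent_semidomain_def by simp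

lemma laurentI: "finite {n. f $$ n \<noteq> 0} \<Longrightarrow> (\<And>n. f $$ n \<in> S) \<Longrightarrow> f \<in> laurent_semidomain S"
  unfolding laurent_semidomain_def by simp

lemma semidomain_laurent: assumes S: "semidomain S" shows "semidomain (laurent_semidomain S)"
proof -
  have "0 \<in> laurent_semidomain S" by (rule laurentI) (auto simp: sd_zero[OF S])
  moreover have "1 \<in> laurent_semidomain S"
  proof (rule laurentI)
    show "finite {n. (1::'a fls) $$ n \<noteq> 0}" by (rule finite_subset[of _ "{0}"]) auto
  qed (auto simp: sd_zero[OF S] sd_one[OF S])
  moreover have "a + b \<in> laurent_semidomain S \<and> a * b \<in> laurent_semidomain S"
    if a: "a \<in> laurent_semidomain S" and b: "b \<in> laurent_semidomain S" for a b
  proof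
    have fa: "finite {n. a $$ n \<noteq> 0}" "\<forall>n. a $$ n \<in> S" using laurentD[OF a] by auto
    have fb: "finite {n. b $$ n \<noteq> 0}" "\<forall>n. b $$ n \<in> S" using laurentD[OF b] by auto
    show "a + b \<in> laurent_semidomain S"
    proof (rule laurentI)
      show "finite {n. (a + b) $$ n \<noteq> 0}"
        by (rule finite_subset[of _ "{n. a $$ n \<noteq> 0} \<union> {n. b $$ n \<noteq> 0}"]) (use fa fb in auto)
    qed (use fa fb sd_add[OF S] in auto)
    obtain A where A: "\<forall>n>A. a $$ n = 0" using supp_bound fa by blast
    obtain B where B: "\<forall>n>B. b $$ n = 0" using supp_bound fb by blast
    show "a * b \<in> laurent_semidomain S"
    proof (rule laurentI)
      show "finite {n. (a * b) $$ n \<noteq> 0}"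
      proof (rule finite_subset[of _ "{fls_subdegree a + fls_subdegree b..A + B}"])
        show "{n. (a * b) $$ n \<noteq> 0} \<subseteq> {fls_subdegree a + fls_subdegree b..A + B}"
        proof
          fix n assume n: "n \<in> {n. (a * b) $$ n \<noteq> 0}"
          then have "\<not> n < fls_subdegree a + fls_subdegree b" using fls_times_nth_eq0 by auto
          moreover have "n \<le> A + B"
          proof (rule ccontr)
            assume "\<not> n \<le> A + B"
            have prod0: "\<forall>i. a $$ i * b $$ (n - i) = 0"
            proof
              fix i show "a $$ i * b $$ (n - i) = 0"
              proof (cases "i > A")
                case True then show ?thesis using A by simp
              next
                case False
                then have "n - i > B" using \<open>\<not> n \<le> A + B\<close> by linarith
                then show ?thesis using B by simp
              qed
            qed
            have "(a * b) $$ n = (\<Sum>i=fls_subdegree a..n - fls_subdegree b. a $$ i * b $$ (n - i))"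
              by (rule fls_times_nth(2))
            also have "\<dots> = 0" by (rule sum.neutral) (use prod0 in blast)
            finally have "(a * b) $$ n = 0" .
            then show False using n by simp
          qed
          ultimately show "n \<in> {fls_subdegree a + fls_subdegree b..A + B}" by simp
        qed
      qed simp
      show "(a * b) $$ n \<in> S" for n
        unfolding fls_times_nth(2) using fa fb sd_mult[OF S] by (auto intro!: sd_sum[OF S])
    qed
  qed
  ultimately show ?thesis unfolding semidomain_def by blast
qed

lemma fconst_in: "semidomain S \<Longrightarrow> c \<in> S \<Longrightarrow> fls_const c \<in> laurent_semidomain S"
  by (rule laurentI, rule finite_subset[of _ "{0}"]) (auto simp: sd_zero)

lemma sunit_fconst:
  assumes S: "semidomain S" and c: "c \<in> S"
  shows "sunit (laurent_semidomain S) (fls_const c) \<longleftrightarrow> sunit S c"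
proof
  assume "sunit (laurent_semidomain S) (fls_const c)"
  then obtain g where g: "g \<in> laurent_semidomain S" "fls_const c * g = 1" unfolding sunit_def by auto
  have "(fls_const c * g) $$ 0 = 1" using g by simp
  then have e: "c * g $$ 0 = 1" by simp
  have "g $$ 0 \<in> S" using laurentD[OF g(1)] by auto
  then show "sunit S c" unfolding sunit_def using c e
    by (metis mult_zero_left mult_zero_right zero_neq_one)
next
  assume "sunit S c"
  then obtain v where v: "v \<in> S" "v \<noteq> 0" "c * v = 1" "c \<noteq> 0" unfolding sunit_def by auto
  have "fls_const c * fls_const v = 1" using v by simp
  moreover have "fls_const v \<noteq> 0" "fls_const c \<noteq> 0" using v by (auto intro: fls_nonzeroI[of _ 0])
  ultimately show "sunit (laurent_semidomain S) (fls_const c)"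
    unfolding sunit_def using fconst_in[OF S] c v(1) by blast
qed

lemma prod_list_fconst: "prod_list (map fls_const xs) = fls_const (prod_list xs :: 'a::idom)"
  by (induction xs) auto

lemma bf_prod_list: "fls_base_factor (prod_list gs) = prod_list (map fls_base_factor (gs :: 'a::idom fls list))"
proof (induction gs)
  case Nil
  show ?case unfolding prod_list.Nil list.map by (rule fls_base_factor_one)
next
  case (Cons a gs)
  show ?case unfolding prod_list.Cons list.map fls_base_factor_mult Cons.IH ..
qed

lemma psi_prod_list: "psi (prod_list ps) = prod_list (map psi (ps :: 'a::idom poly list))"
  by (induction ps) (auto simp: fps_of_poly_mult fls_times_fps_to_fls)

lemma base_poly:
  assumes S: "semidomain S" and g: "g \<in> laurent_semidomain S"
  shows "\<exists>p \<in> poly_semidomain S. psi p = fls_base_factor g"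
proof -
  define h where "h = fls_base_factor g"
  have hn: "h $$ n = g $$ (n + fls_subdegree g)" for n unfolding h_def by (rule fls_base_factor_nth)
  have fg: "finite {n. g $$ n \<noteq> 0}" "\<forall>n. g $$ n \<in> S" using laurentD[OF g] by auto
  have "{n. h $$ n \<noteq> 0} \<subseteq> (\<lambda>n. n - fls_subdegree g) ` {n. g $$ n \<noteq> 0}"
  proof
    fix n assume "n \<in> {n. h $$ n \<noteq> 0}"
    then show "n \<in> (\<lambda>n. n - fls_subdegree g) ` {n. g $$ n \<noteq> 0}"
      by (intro image_eqI[of _ _ "n + fls_subdegree g"]) (auto simp: hn)
  qed
  then have "finite {n. h $$ n \<noteq> 0}" using fg finite_subset by blast
  then obtain A where A: "\<forall>n>A. h $$ n = 0" using supp_bound by blast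
  have neg: "h $$ n = 0" if "n < 0" for n
    using that unfolding h_def by (simp add: fls_eq0_below_subdegree)
  define p where "p = Poly (map (\<lambda>i. h $$ int i) [0..<Suc (nat A)])"
  have cp: "coeff p i = h $$ int i" for i
  proof (cases "i < Suc (nat A)")
    case True
    then show ?thesis unfolding p_def by (simp add: nth_default_def del: upt_Suc)
  next
    case False
    then have "int i > A" by linarith
    then show ?thesis using False A unfolding p_def by (simp add: nth_default_def)
  qed
  have "psi p = h"
  proof (rule fls_eqI)
    fix n show "psi p $$ n = h $$ n" using cp neg by simp
  qed
  moreover have "p \<in> poly_semidomain S" unfolding poly_semidomain_def using cp hn fg by simp
  ultimately show ?thesis unfolding h_def by blast
qed

lemma sunit_from_base:
  assumes S: "semidomain S" and g: "g \<in> laurent_semidomain S" "g \<noteq> 0"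
    and p: "p \<in> poly_semidomain S" "psi p = fls_base_factor g" "sunit (poly_semidomain S) p"
  shows "sunit (laurent_semidomain S) g"
proof -
  have "degree p = 0" "sunit S (coeff p 0)" using sunit_poly_iff[OF S p(1)] p(3) by auto
  then obtain u where u: "p = [:u:]" "sunit S u" by (metis degree_0_id)
  then obtain v where v: "v \<in> S" "v \<noteq> 0" "u * v = 1" unfolding sunit_def by auto
  have bf: "fls_base_factor g = fls_const u" using p(2) u by (simp add: fps_of_poly_const)
  define k where "k = fls_subdegree g"
  have ge: "g = fls_shift (- k) (fls_const u)"
    using fls_conv_base_factor_shift_subdegree[of g, unfolded bf] unfolding k_def .
  define h where "h = fls_shift k (fls_const v)"
  have "g * h = fls_shift (- k + k) (fls_const u * fls_const v)"
    unfolding ge h_def by (rule fls_times_both_shifted_simp)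
  then have gh: "g * h = 1" using v by simp
  have hL: "h \<in> laurent_semidomain S"
  proof (rule laurentI)
    show "finite {n. h $$ n \<noteq> 0}"
      by (rule finite_subset[of _ "{-k}"]) (auto simp: h_def fls_shift_const_nth)
    show "h $$ n \<in> S" for n using v sd_zero[OF S] by (simp add: h_def fls_shift_const_nth)
  qed
  have "h $$ (-k) \<noteq> 0" using v by (simp add: h_def fls_shift_const_nth)
  then have "h \<noteq> 0" by (rule fls_nonzeroI)
  then show ?thesis unfolding sunit_def using g hL gh by blast
qed

lemma gb_laurent: assumes S: "semidomain S" and gP: "gb (poly_semidomain S)"
  shows "gb (laurent_semidomain S)"
  unfolding gb_def
proof
  fix f assume f: "f \<in> laurent_semidomain S - {0}"
  define pp where "pp g = (SOME p. p \<in> poly_semidomain S \<and> psi p = fls_base_factor g)" for g :: "'a fls"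
  have pp: "pp g \<in> poly_semidomain S \<and> psi (pp g) = fls_base_factor g" if gL: "g \<in> laurent_semidomain S" for g
  proof -
    obtain p where "p \<in> poly_semidomain S \<and> psi p = fls_base_factor g" using base_poly[OF S gL] by blast
    then show ?thesis unfolding pp_def by (rule someI)
  qed
  have pf1: "pp f \<in> poly_semidomain S" "psi (pp f) = fls_base_factor f" using pp[of f] f by auto
  have "fls_base_factor f \<noteq> 0" using f fls_base_factor_nonzero[of f] by blast
  then have "pp f \<noteq> 0" using pf1(2) by auto
  then have pf: "pp f \<in> poly_semidomain S - {0}" using pf1 by auto
  then obtain N where N: "\<forall>xs. set xs \<subseteq> poly_semidomain S \<and> prod_list xs = pp f \<longrightarrow>
      length (filter (\<lambda>x. \<not> sunit (poly_semidomain S) x) xs) \<le> N" using gP unfolding gb_def by blast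
  show "\<exists>N. \<forall>gs. set gs \<subseteq> laurent_semidomain S \<and> prod_list gs = f \<longrightarrow>
      length (filter (\<lambda>x. \<not> sunit (laurent_semidomain S) x) gs) \<le> N"
  proof (intro exI[of _ N] allI impI)
    fix gs assume gs: "set gs \<subseteq> laurent_semidomain S \<and> prod_list gs = f"
    have nz: "0 \<notin> set gs" using gs f by (auto simp: prod_list_zero_iff)
    have s1: "set (map pp gs) \<subseteq> poly_semidomain S" using gs pp by auto
    have "psi (prod_list (map pp gs)) = prod_list (map psi (map pp gs))" by (rule psi_prod_list)
    also have "map psi (map pp gs) = map fls_base_factor gs" using gs pp by auto
    also have "prod_list (map fls_base_factor gs) = fls_base_factor f" using gs bf_prod_list by metis
    also have "\<dots> = psi (pp f)" using pp[of f] f by auto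
    finally have "prod_list (map pp gs) = pp f" by simp
    with s1 N have "length (filter (\<lambda>x. \<not> sunit (poly_semidomain S) x) (map pp gs)) \<le> N" by blast
    moreover have "length (filter (\<lambda>x. \<not> sunit (laurent_semidomain S) x) gs) \<le>
        length (filter (\<lambda>g. \<not> sunit (poly_semidomain S) (pp g)) gs)"
    proof (rule filter_count_le1, intro ballI impI notI)
      fix g assume g: "g \<in> set gs" "\<not> sunit (laurent_semidomain S) g" "sunit (poly_semidomain S) (pp g)"
      have "g \<in> laurent_semidomain S" "g \<noteq> 0" using g gs nz by auto
      then show False using sunit_from_base[OF S _ _ _ _ g(3)] pp g(2) by blast
    qed
    ultimately show "length (filter (\<lambda>x. \<not> sunit (laurent_semidomain S) x) gs) \<le> N"
      by (simp add: filter_map o_def)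
  qed
qed

lemma gb_laurent_rev: assumes S: "semidomain S" and g: "gb (laurent_semidomain S)" shows "gb S"
  unfolding gb_def
proof
  fix b assume b: "b \<in> S - {0}"
  then have "fls_const b \<in> laurent_semidomain S - {0}" using fconst_in[OF S] by (auto intro: fls_nonzeroI[of _ 0])
  then obtain N where N: "\<forall>xs. set xs \<subseteq> laurent_semidomain S \<and> prod_list xs = fls_const b \<longrightarrow>
      length (filter (\<lambda>x. \<not> sunit (laurent_semidomain S) x) xs) \<le> N" using g unfolding gb_def by blast
  show "\<exists>N. \<forall>xs. set xs \<subseteq> S \<and> prod_list xs = b \<longrightarrow> length (filter (\<lambda>x. \<not> sunit S x) xs) \<le> N"
  proof (intro exI[of _ N] allI impI)
    fix xs assume xs: "set xs \<subseteq> S \<and> prod_list xs = b"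
    have "set (map fls_const xs) \<subseteq> laurent_semidomain S" using xs fconst_in[OF S] by auto
    moreover have "prod_list (map fls_const xs) = fls_const b" using xs prod_list_fconst by metis
    ultimately have "length (filter (\<lambda>x. \<not> sunit (laurent_semidomain S) x) (map fls_const xs)) \<le> N"
      using N by blast
    moreover have "filter (\<lambda>x. \<not> sunit (laurent_semidomain S) (fls_const x)) xs = filter (\<lambda>x. \<not> sunit S x) xs"
      using xs sunit_fconst[OF S] by (intro filter_cong) auto
    ultimately show "length (filter (\<lambda>x. \<not> sunit S x) xs) \<le> N" by (simp add: filter_map o_def)
  qed
qed

theorem theorem4p3:
  fixes S :: "'a::idom set"
  assumes "semidomain S"
  shows "(BFS S \<longleftrightarrow> BFS (poly_semidomain S)) \<and> (BFS S \<longleftrightarrow> BFS (laurent_semidomain S))"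
proof
  show P: "BFS S \<longleftrightarrow> BFS (poly_semidomain S)" using BFS_poly_iff[OF assms] .
  show "BFS S \<longleftrightarrow> BFS (laurent_semidomain S)"
    using BFS_iff_gb[OF assms] BFS_iff_gb[OF semidomain_poly[OF assms]]
      BFS_iff_gb[OF semidomain_laurent[OF assms]] P gb_laurent[OF assms] gb_laurent_rev[OF assms]
    by blast
qed

end
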